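(* Let $(X,d_X)$ be a compact geodesic metric space, $r\in X$, $d=d_X(r,\cdot)$, and let $(G,d_G)$ be either the metric Reeb graph of $d$ or the metric $\alpha$-Reeb graph of $d$ (for some $\alpha>0$ and some covering $\mathcal I$), assumed to be a finite graph, with induced function $d_*:G\to\mathbb R_+$. If $\delta$ is a path in $G$ joining two points $p,p'\in G$ such that $d_*\circ\delta$ is strictly increasing, then $\delta$ is a shortest path between $p$ and $p'$ and $d_G(p,p')=d_*(p')-d_*(p)$.
   Context: Reeb graph: for $x,y\in X$ set $x\sim y$ iff $d(x)=d(y)$ and $x,y$ lie in the same path-connected component of $d^{-1}(d(x))$; $G=X/\sim$, with quotient map $\pi:X\to G$. $\alpha$-Reeb graph: given $\alpha>0$ and a covering $\mathcal I=\{I_i\}$ of the range of $d$ by open intervals of length at most $\alpha$, let $\sim_\alpha$ be the transitive closure of the relation "$d(x)=d(y)$ and $x,y$ lie in the same path-connected component of $d^{-1}(I_i)$ for some $i$"; $G=X/\sim_\alpha$ with quotient map $\pi$. In both cases $d$ induces $d_*:G\to\mathbb R_+$ with $d=d_*\circ\pi$. Metric structure (assuming $G$ is a finite topological graph): the vertex set $V$ consists of the points of degree $\neq 2$, the local maxima of $d_*$, and $\pi(r)$; the edges are the connected components of $G\setminus V$. Each edge, homeomorphic to an interval, is given length equal to the absolute difference of $d_*$ at its endpoints, the distance between two points $p,p'$ of the same edge being $|d_*(p)-d_*(p')|$; $d_G$ is the resulting metric-graph (shortest path) metric on $G$. *)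

theory Defs
  imports "HOL-Analysis.Analysis"
begin

definition geodesic_space :: "'a::metric_space set \<Rightarrow> bool" where
  "geodesic_space X \<longleftrightarrow>
     (\<forall>x\<in>X. \<forall>y\<in>X. \<exists>\<gamma>::real \<Rightarrow> 'a. \<gamma> 0 = x \<and> \<gamma> 1 = y \<and> \<gamma> ` {0..1} \<subseteq> X \<and>
        (\<forall>s\<in>{0..1}. \<forall>t\<in>{0..1}. dist (\<gamma> s) (\<gamma> t) = \<bar>s - t\<bar> * dist x y))"

definition reeb_rel :: "'a::topological_space set \<Rightarrow> ('a \<Rightarrow> real) \<Rightarrow> 'a \<Rightarrow> 'a \<Rightarrow> bool" where
  "reeb_rel X f x y \<longleftrightarrow> x \<in> X \<and> y \<in> X \<and> f x = f y \<and>
       path_component {z \<in> X. f z = f x} x y"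

definition interval_cover :: "real \<Rightarrow> real set set \<Rightarrow> real set \<Rightarrow> bool" where
  "interval_cover \<alpha> I S \<longleftrightarrow>
     (\<forall>J\<in>I. \<exists>a b. a < b \<and> b - a \<le> \<alpha> \<and> J = {a<..<b}) \<and> S \<subseteq> \<Union>I"

definition alpha_reeb_base :: "'a::topological_space set \<Rightarrow> ('a \<Rightarrow> real) \<Rightarrow> real set set \<Rightarrow> 'a \<Rightarrow> 'a \<Rightarrow> bool" where
  "alpha_reeb_base X f I x y \<longleftrightarrow> x \<in> X \<and> y \<in> X \<and> f x = f y \<and>
       (\<exists>J\<in>I. path_component {z \<in> X. f z \<in> J} x y)"

definition alpha_reeb_rel :: "'a::topological_space set \<Rightarrow> ('a \<Rightarrow> real) \<Rightarrow> real set set \<Rightarrow> 'a \<Rightarrow> 'a \<Rightarrow> bool" where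
  "alpha_reeb_rel X f I = (alpha_reeb_base X f I)\<^sup>+\<^sup>+"

definition quot_map :: "'a set \<Rightarrow> ('a \<Rightarrow> 'a \<Rightarrow> bool) \<Rightarrow> 'a \<Rightarrow> 'a set" where
  "quot_map X R x = {y \<in> X. R x y}"

definition induced_fun :: "('a \<Rightarrow> real) \<Rightarrow> 'a set \<Rightarrow> real" where
  "induced_fun f c = f (SOME x. x \<in> c)"

definition finite_top_graph :: "'b topology \<Rightarrow> bool" where
  "finite_top_graph T \<longleftrightarrow> Hausdorff_space T \<and> compact_space T \<and>
     (\<exists>V. finite V \<and> V \<subseteq> topspace T \<and>
        finite (connected_components_of (subtopology T (topspace T - V))) \<and>
        (\<forall>E \<in> connected_components_of (subtopology T (topspace T - V)).
           \<exists>h a b. homeomorphic_map (top_of_set {0<..<1::real}) (subtopology T E) h \<and>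
              a \<in> V \<and> b \<in> V \<and> limitin T h a (at_right 0) \<and> limitin T h b (at_left 1)))"

definition star_nbhd :: "'b topology \<Rightarrow> 'b \<Rightarrow> 'b set \<Rightarrow> nat \<Rightarrow> bool" where
  "star_nbhd T p U n \<longleftrightarrow> openin T U \<and> p \<in> U \<and>
     finite (connected_components_of (subtopology T (U - {p}))) \<and>
     card (connected_components_of (subtopology T (U - {p}))) = n \<and>
     (\<forall>C \<in> connected_components_of (subtopology T (U - {p})).
        \<exists>h. homeomorphic_map (top_of_set {0..<1::real}) (subtopology T (C \<union> {p})) h \<and> h 0 = p)"

definition degree :: "'b topology \<Rightarrow> 'b \<Rightarrow> nat" where
  "degree T p = (THE n. \<exists>U. star_nbhd T p U n)"

definition is_local_max :: "'b topology \<Rightarrow> ('b \<Rightarrow> real) \<Rightarrow> 'b \<Rightarrow> bool" where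
  "is_local_max T f p \<longleftrightarrow> (\<exists>U. openin T U \<and> p \<in> U \<and> (\<forall>q\<in>U. f q \<le> f p))"

definition graph_vertices :: "'b topology \<Rightarrow> ('b \<Rightarrow> real) \<Rightarrow> 'b \<Rightarrow> 'b set" where
  "graph_vertices T f v =
     {p \<in> topspace T. degree T p \<noteq> 2} \<union> {p \<in> topspace T. is_local_max T f p} \<union> {v}"

definition graph_edges :: "'b topology \<Rightarrow> ('b \<Rightarrow> real) \<Rightarrow> 'b \<Rightarrow> 'b set set" where
  "graph_edges T f v = connected_components_of (subtopology T (topspace T - graph_vertices T f v))"

text \<open>Shortest-path metric of the metric graph: each edge carries the metric
  |f p - f p'| (its length being the difference of f at its endpoints); the distance is
  the infimum of lengths of chains whose consecutive points lie in a common closed edge.\<close>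
definition graph_dist :: "'b topology \<Rightarrow> ('b \<Rightarrow> real) \<Rightarrow> 'b \<Rightarrow> 'b \<Rightarrow> 'b \<Rightarrow> real" where
  "graph_dist T f v p p' = Inf {(\<Sum>i<n. \<bar>f (q i) - f (q (Suc i))\<bar>) | q n.
      q 0 = p \<and> q n = p' \<and>
      (\<forall>i<n. \<exists>E \<in> graph_edges T f v. q i \<in> T closure_of E \<and> q (Suc i) \<in> T closure_of E)}"

definition path_length :: "('b \<Rightarrow> 'b \<Rightarrow> real) \<Rightarrow> (real \<Rightarrow> 'b) \<Rightarrow> ereal" where
  "path_length D \<gamma> = (SUP (t, n) \<in> {(t, n). t 0 = 0 \<and> t n = 1 \<and> (\<forall>i<n. t i \<le> t (Suc i))}.
       ereal (\<Sum>i<n. D (\<gamma> (t i)) (\<gamma> (t (Suc i)))))"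

end

theory Submission
  imports Defs
begin


lemma sep_lemma:
  assumes "connectedin T K" "K \<subseteq> L \<union> R" "openin T L" "openin T R" "L \<inter> R = {}" "K \<inter> L \<noteq> {}"
  shows "K \<subseteq> L"
proof -
  have "R \<inter> K = {}"
    using assms unfolding connectedin by blast
  then show ?thesis using assms(2) by blast
qed

lemma two_comps:
  assumes "openin T L" "openin T R" "connectedin T L" "connectedin T R" "L \<inter> R = {}"
  shows "connected_components_of (subtopology T (L \<union> R)) = {L, R} - {{}}"
proof -
  let ?X = "subtopology T (L \<union> R)"
  have LR: "L \<subseteq> topspace T" "R \<subseteq> topspace T" using assms openin_subset by auto
  have top: "topspace ?X = L \<union> R" using LR by auto
  have cL: "connected_component_of_set ?X x = L" if "x \<in> L" for x
  proof
    show "L \<subseteq> connected_component_of_set ?X x"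
      by (rule connected_component_of_maximal) (use assms that in \<open>auto simp: connectedin_subtopology\<close>)
    have "connectedin T (connected_component_of_set ?X x)" "connected_component_of_set ?X x \<subseteq> L \<union> R"
      using connectedin_connected_component_of[of ?X x] by (auto simp: connectedin_subtopology)
    moreover have "connected_component_of_set ?X x \<inter> L \<noteq> {}"
    proof -
      have "x \<in> connected_component_of_set ?X x" using that top by (simp add: connected_component_of_refl)
      then show ?thesis using that by blast
    qed
    ultimately show "connected_component_of_set ?X x \<subseteq> L"
      using sep_lemma assms by blast
  qed
  have cR: "connected_component_of_set ?X x = R" if "x \<in> R" for x
  proof
    show "R \<subseteq> connected_component_of_set ?X x"
      by (rule connected_component_of_maximal) (use assms that in \<open>auto simp: connectedin_subtopology\<close>)
    have "connectedin T (connected_component_of_set ?X x)" "connected_component_of_set ?X x \<subseteq> R \<union> L"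
      using connectedin_connected_component_of[of ?X x] by (auto simp: connectedin_subtopology)
    moreover have "connected_component_of_set ?X x \<inter> R \<noteq> {}"
    proof -
      have "x \<in> connected_component_of_set ?X x" using that top by (simp add: connected_component_of_refl)
      then show ?thesis using that by blast
    qed
    ultimately show "connected_component_of_set ?X x \<subseteq> R"
      using sep_lemma[of T _ R L] assms by blast
  qed
  show ?thesis
    unfolding connected_components_of_def top using cL cR by (auto simp: image_iff; metis Un_iff)
qed




lemma affine_homR:
  fixes c b :: real assumes "c < b"
  shows "homeomorphic_map (top_of_set {0..<1}) (top_of_set {c..<b}) (\<lambda>s. c + s * (b - c))"
proof -
  have "homeomorphic_maps (top_of_set {0..<1}) (top_of_set {c..<b}) (\<lambda>s. c + s * (b - c)) (\<lambda>y. (y - c) / (b - c))"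
    unfolding homeomorphic_maps_def using assms
    by (auto simp: field_simps intro!: continuous_intros mult_left_mono; smt (verit, best) mult_less_cancel_right2 right_diff_distrib)
  then show ?thesis using homeomorphic_map_maps by blast
qed

lemma affine_homL:
  fixes c a :: real assumes "a < c"
  shows "homeomorphic_map (top_of_set {0..<1}) (top_of_set {a<..c}) (\<lambda>s. c - s * (c - a))"
proof -
  have "homeomorphic_maps (top_of_set {0..<1}) (top_of_set {a<..c}) (\<lambda>s. c - s * (c - a)) (\<lambda>y. (c - y) / (c - a))"
    unfolding homeomorphic_maps_def using assms
    by (auto simp: field_simps intro!: continuous_intros mult_left_mono; smt (verit, best) mult_less_cancel_right2 right_diff_distrib)
  then show ?thesis using homeomorphic_map_maps by blast
qed




locale arc_ctx =
  fixes T :: "'b topology" and E :: "'b set" and h :: "real \<Rightarrow> 'b"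
  assumes E: "openin T E"
    and hh: "homeomorphic_map (top_of_set {0<..<1}) (subtopology T E) h"
begin

lemma Esub: "E \<subseteq> topspace T" using E openin_subset by blast

lemma himg: "h ` {0<..<1} = E"
  using homeomorphic_imp_surjective_map[OF hh] Esub by auto

lemma hinj: "inj_on h {0<..<1}"
  using homeomorphic_imp_injective_map[OF hh] by simp

lemma hcont: "continuous_map (top_of_set {0<..<1}) T h"
  using homeomorphic_imp_continuous_map[OF hh] continuous_map_in_subtopology by blast

lemma hopen:
  assumes "0 \<le> a" "b \<le> 1"
  shows "openin T (h ` {a<..<b})"
proof -
  have "openin (top_of_set {0<..<1}) {a<..<b}"
    unfolding openin_open using assms by (intro exI[of _ "{a<..<b}"]) auto
  moreover have "{a<..<b} \<subseteq> {0<..<1}" using assms by auto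
  ultimately have "openin (subtopology T E) (h ` {a<..<b})"
    using homeomorphic_map_openness[OF hh, of "{a<..<b}"] by simp
  then show ?thesis using openin_trans_full E by blast
qed

lemma hconn:
  assumes "0 \<le> a" "b \<le> 1"
  shows "connectedin T (h ` {a<..<b})"
  by (rule connectedin_continuous_map_image[OF hcont])
     (use assms in \<open>auto simp: connectedin_subtopology\<close>)

lemma hclos:
  assumes "0 < x" "x < 1" "x \<in> closure S" "S \<subseteq> {0<..<1}"
  shows "h x \<in> T closure_of (h ` S)"
proof -
  have "x \<in> (top_of_set {0<..<1}) closure_of S"
    using assms by (simp add: closure_of_subtopology Int_absorb1)
  then show ?thesis using continuous_map_image_closure_subset[OF hcont, of S] by blast
qed

lemma hsub_hom:
  assumes "J \<subseteq> {0<..<1}"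
  shows "homeomorphic_map (top_of_set J) (subtopology T (h ` J)) h"
proof -
  have "homeomorphic_map (subtopology (top_of_set {0<..<1}) J) (subtopology (subtopology T E) (h ` J)) h"
    by (rule homeomorphic_map_subtopologies[OF hh]) (use assms himg Esub in auto)
  moreover have "subtopology (top_of_set {0<..<1}) J = top_of_set J"
    using assms by (simp add: subtopology_subtopology Int_absorb1)
  moreover have "subtopology (subtopology T E) (h ` J) = subtopology T (h ` J)"
    using assms himg by (auto simp: subtopology_subtopology Int_absorb2 intro!: arg_cong[where f="subtopology T"])
  ultimately show ?thesis by simp
qed

end




context arc_ctx begin

lemma seg_hom:
  assumes "J \<subseteq> {0<..<1}" "homeomorphic_map (top_of_set {0..<1}) (top_of_set J) \<phi>"
  shows "homeomorphic_map (top_of_set {0..<1}) (subtopology T (h ` J)) (h \<circ> \<phi>)"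
  by (rule homeomorphic_map_compose[OF assms(2) hsub_hom[OF assms(1)]])

lemma star_exists:
  assumes c: "0 < c" "c < 1"
  shows "star_nbhd T (h c) (h ` {c/2<..<(c+1)/2}) 2"
proof -
  define a0 where "a0 = c/2"
  define b0 where "b0 = (c+1)/2"
  have ab: "0 < a0" "a0 < c" "c < b0" "b0 < 1" using c by (auto simp: a0_def b0_def)
  define L where "L = h ` {a0<..<c}"
  define R where "R = h ` {c<..<b0}"
  let ?U = "h ` {a0<..<b0}"
  have sub: "{a0<..<b0} \<subseteq> {0<..<1}" using ab by auto
  have Uo: "openin T ?U" using hopen ab by auto
  have pU: "h c \<in> ?U" using ab by auto
  have "?U - {h c} = h ` ({a0<..<b0} - {c})"
    using inj_on_image_set_diff[OF hinj, of "{a0<..<b0}" "{c}"] sub ab by auto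
  also have "{a0<..<b0} - {c} = {a0<..<c} \<union> {c<..<b0}" using ab by auto
  finally have UpLR: "?U - {h c} = L \<union> R" unfolding L_def R_def by auto
  have LR: "L \<inter> R = {}"
  proof -
    { fix x y assume "x \<in> {a0<..<c}" "y \<in> {c<..<b0}" "h x = h y"
      then have "x = y" using inj_onD[OF hinj, of x y] ab by auto
      then have False using \<open>x \<in> {a0<..<c}\<close> \<open>y \<in> {c<..<b0}\<close> by auto }
    then show ?thesis unfolding L_def R_def by blast
  qed
  have Lne: "L \<noteq> {}" "R \<noteq> {}" using ab unfolding L_def R_def by auto
  have comps: "connected_components_of (subtopology T (?U - {h c})) = {L, R}"
    unfolding UpLR
    using two_comps[of T L R] hopen hconn ab LR Lne unfolding L_def R_def by auto
  have "L \<noteq> R" using LR Lne by auto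
  then have card: "card {L, R} = 2" by simp
  have homL: "\<exists>g. homeomorphic_map (top_of_set {0..<1::real}) (subtopology T (L \<union> {h c})) g \<and> g 0 = h c"
  proof -
    have "{a0<..c} = insert c {a0<..<c}" using ab by auto
    then have "L \<union> {h c} = h ` {a0<..c}" unfolding L_def by auto
    moreover have "homeomorphic_map (top_of_set {0..<1}) (subtopology T (h ` {a0<..c})) (h \<circ> (\<lambda>s. c - s * (c - a0)))"
      by (rule seg_hom) (use ab affine_homL in auto)
    ultimately show ?thesis by (intro exI[of _ "h \<circ> (\<lambda>s. c - s * (c - a0))"]) auto
  qed
  have homR: "\<exists>g. homeomorphic_map (top_of_set {0..<1::real}) (subtopology T (R \<union> {h c})) g \<and> g 0 = h c"
  proof -
    have "{c..<b0} = insert c {c<..<b0}" using ab by auto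
    then have "R \<union> {h c} = h ` {c..<b0}" unfolding R_def by auto
    moreover have "homeomorphic_map (top_of_set {0..<1}) (subtopology T (h ` {c..<b0})) (h \<circ> (\<lambda>s. c + s * (b0 - c)))"
      by (rule seg_hom) (use ab affine_homR in auto)
    ultimately show ?thesis by (intro exI[of _ "h \<circ> (\<lambda>s. c + s * (b0 - c))"]) auto
  qed
  show ?thesis
    unfolding star_nbhd_def a0_def[symmetric] b0_def[symmetric] comps
    using Uo pU card homL homR by auto
qed

end



context arc_ctx begin

lemma heq: "h x = h y \<Longrightarrow> x \<in> {0<..<1} \<Longrightarrow> y \<in> {0<..<1} \<Longrightarrow> x = y"
  using inj_onD[OF hinj] by blast

lemma star_unique:
  assumes c: "0 < c" "c < 1" and st: "star_nbhd T (h c) U n"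
  shows "n = 2"
proof -
  define p where "p = h c"
  let ?K = "connected_components_of (subtopology T (U - {p}))"
  have Uo: "openin T U" and pU: "p \<in> U" and cardK: "card ?K = n"
    and homC: "\<And>C. C \<in> ?K \<Longrightarrow> \<exists>g. homeomorphic_map (top_of_set {0..<1::real}) (subtopology T (C \<union> {p})) g \<and> g 0 = p"
    using st[unfolded star_nbhd_def] p_def by blast+
  have Usub: "U \<subseteq> topspace T" using Uo openin_subset by blast
  have "openin (top_of_set {0<..<1}) {s \<in> topspace (top_of_set {0<..<1}). h s \<in> U}"
    by (rule openin_continuous_map_preimage[OF hcont Uo])
  then have "openin (top_of_set {0<..<1}) {s \<in> {0<..<1}. h s \<in> U}" by simp
  then have "\<forall>x\<in>{s \<in> {0<..<1}. h s \<in> U}. \<exists>e>0. \<forall>x'\<in>{0<..<1}. dist x' x < e \<longrightarrow> x' \<in> {s \<in> {0<..<1}. h s \<in> U}"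
    unfolding openin_euclidean_subtopology_iff by blast
  moreover have "c \<in> {s \<in> {0<..<1}. h s \<in> U}" using c pU p_def by auto
  ultimately obtain e where e: "e > 0" "\<And>x'. x' \<in> {0<..<1} \<Longrightarrow> dist x' c < e \<Longrightarrow> h x' \<in> U"
    by blast
  define a1 where "a1 = max (c - e/2) (c/2)"
  define b1 where "b1 = min (c + e/2) ((c+1)/2)"
  have ab: "0 < a1" "a1 < c" "c < b1" "b1 < 1" using c e(1) by (auto simp: a1_def b1_def min_def max_def)
  have WU: "h x \<in> U" if "a1 < x" "x < b1" for x
    using e(2)[of x] that ab e(1) by (auto simp: a1_def b1_def dist_real_def)
  define L where "L = h ` {a1<..<c}"
  define R where "R = h ` {c<..<b1}"
  define W where "W = h ` {a1<..<b1}"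
  have Wo: "openin T W" unfolding W_def using hopen ab by auto
  have pW: "p \<in> W" unfolding W_def p_def using ab by auto
  have Lo: "openin T L" "openin T R" unfolding L_def R_def using hopen ab by auto
  have Lc: "connectedin T L" "connectedin T R" unfolding L_def R_def using hconn ab by auto
  have LR: "L \<inter> R = {}"
  proof -
    { fix x y assume "x \<in> {a1<..<c}" "y \<in> {c<..<b1}" "h x = h y"
      then have "x = y" using heq[of x y] ab by auto
      then have False using \<open>x \<in> {a1<..<c}\<close> \<open>y \<in> {c<..<b1}\<close> by auto }
    then show ?thesis unfolding L_def R_def by blast
  qed
  have pnot: "p \<notin> L" "p \<notin> R"
  proof -
    show "p \<notin> L" unfolding L_def p_def using heq[of c] ab by fastforce
    show "p \<notin> R" unfolding R_def p_def using heq[of c] ab by fastforce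
  qed
  have WLR: "W - {p} = L \<union> R"
  proof -
    have "{a1<..<b1} = {a1<..<c} \<union> {c} \<union> {c<..<b1}" using ab by auto
    then have "W = L \<union> {p} \<union> R" unfolding W_def L_def R_def p_def by auto
    then show ?thesis using pnot by auto
  qed
  have LRU: "L \<subseteq> U - {p}" "R \<subseteq> U - {p}"
    using WU pnot ab unfolding L_def R_def by auto
  have pclL: "p \<in> T closure_of L" unfolding p_def L_def
    by (rule hclos) (use c ab in auto)
  have pclR: "p \<in> T closure_of R" unfolding p_def R_def
    by (rule hclos) (use c ab in auto)
  have Kcl: "p \<in> T closure_of C" if C: "C \<in> ?K" for C
  proof -
    obtain g where g: "homeomorphic_map (top_of_set {0..<1::real}) (subtopology T (C \<union> {p})) g" "g 0 = p"
      using homC[OF C] by blast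
    have Csub: "C \<subseteq> U - {p}" using connected_components_of_subset[OF C] by auto
    have gc: "continuous_map (top_of_set {0..<1::real}) T g"
      using homeomorphic_imp_continuous_map[OF g(1)] continuous_map_in_subtopology by blast
    have gimg: "g ` {0..<1} = C \<union> {p}"
      using homeomorphic_imp_surjective_map[OF g(1)] Csub Usub pU by auto
    have ginj: "inj_on g {0..<1}" using homeomorphic_imp_injective_map[OF g(1)] by simp
    have gC: "g ` {0<..<1} \<subseteq> C"
    proof
      fix y assume "y \<in> g ` {0<..<1}"
      then obtain s where s: "s \<in> {0<..<1}" "y = g s" by blast
      then have "y \<in> C \<union> {p}" using gimg by auto
      moreover have "y \<noteq> p" using inj_onD[OF ginj, of s 0] s g(2) by auto
      ultimately show "y \<in> C" by auto
    qed
    have "{0..<1} \<inter> {0<..<1} = {0<..<(1::real)}" by auto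
    then have "(0::real) \<in> (top_of_set {0..<1}) closure_of {0<..<1}"
      by (simp add: closure_of_subtopology)
    then have "p \<in> T closure_of (g ` {0<..<1})"
      using continuous_map_image_closure_subset[OF gc, of "{0<..<1}"] g(2) by blast
    then show ?thesis using closure_of_mono[OF gC] by blast
  qed
  have meets: "C \<inter> L \<noteq> {} \<or> C \<inter> R \<noteq> {}" if C: "C \<in> ?K" for C
  proof -
    have Csub: "C \<subseteq> U - {p}" using connected_components_of_subset[OF C] by auto
    obtain y where "y \<in> C" "y \<in> W" using Kcl[OF C] Wo pW unfolding in_closure_of by blast
    then have "y \<in> L \<union> R" using Csub WLR by auto
    then show ?thesis using \<open>y \<in> C\<close> by blast
  qed
  define xL where "xL = h ((a1 + c)/2)"
  define xR where "xR = h ((c + b1)/2)"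
  have xLL: "xL \<in> L" and xRR: "xR \<in> R" using ab unfolding xL_def xR_def L_def R_def by auto
  define CL where "CL = connected_component_of_set (subtopology T (U - {p})) xL"
  define CR where "CR = connected_component_of_set (subtopology T (U - {p})) xR"
  have CLK: "CL \<in> ?K" "CR \<in> ?K"
    unfolding CL_def CR_def connected_component_in_connected_components_of
    using xLL xRR LRU Usub by auto
  have LCL: "L \<subseteq> CL" unfolding CL_def
    by (rule connected_component_of_maximal) (use Lc LRU xLL in \<open>auto simp: connectedin_subtopology\<close>)
  have RCR: "R \<subseteq> CR" unfolding CR_def
    by (rule connected_component_of_maximal) (use Lc LRU xRR in \<open>auto simp: connectedin_subtopology\<close>)
  have Keq: "?K = {CL, CR}"
  proof
    show "{CL, CR} \<subseteq> ?K" using CLK by auto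
    show "?K \<subseteq> {CL, CR}"
    proof
      fix C assume C: "C \<in> ?K"
      show "C \<in> {CL, CR}"
      proof (cases "C \<inter> L \<noteq> {}")
        case True
        then have "C \<inter> CL \<noteq> {}" using LCL by blast
        then show ?thesis using connected_components_of_overlap[OF C CLK(1)] by auto
      next
        case False
        then have "C \<inter> CR \<noteq> {}" using meets[OF C] RCR by blast
        then show ?thesis using connected_components_of_overlap[OF C CLK(2)] by auto
      qed
    qed
  qed
  show ?thesis
  proof (cases "CL = CR")
    case False
    then show ?thesis using cardK Keq by simp
  next
    case True
    then have "?K = {CL}" using Keq by simp
    then have "CL = U - {p}"
      using Union_connected_components_of[of "subtopology T (U - {p})"] Usub by auto
    then have CLU: "CL \<union> {p} = U" using pU by auto
    obtain g where g: "homeomorphic_map (top_of_set {0..<1::real}) (subtopology T U) g" "g 0 = p"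
      using homC[OF CLK(1)] CLU by auto
    have gc: "continuous_map (top_of_set {0..<1::real}) T g"
      using homeomorphic_imp_continuous_map[OF g(1)] continuous_map_in_subtopology by blast
    have ginj: "inj_on g {0..<1}" using homeomorphic_imp_injective_map[OF g(1)] by simp
    have "openin (top_of_set {0..<1::real}) {s \<in> topspace (top_of_set {0..<1::real}). g s \<in> W}"
      by (rule openin_continuous_map_preimage[OF gc Wo])
    then have "openin (top_of_set {0..<1::real}) {s \<in> {0..<1}. g s \<in> W}" by simp
    then have "\<forall>x\<in>{s \<in> {0..<1::real}. g s \<in> W}. \<exists>e>0. \<forall>x'\<in>{0..<1}. dist x' x < e \<longrightarrow> x' \<in> {s \<in> {0..<1}. g s \<in> W}"
      unfolding openin_euclidean_subtopology_iff by blast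
    moreover have "(0::real) \<in> {s \<in> {0..<1}. g s \<in> W}" using g(2) pW by auto
    ultimately obtain e2 where e2: "e2 > 0" "\<And>x'. x' \<in> {0..<1} \<Longrightarrow> dist x' 0 < e2 \<Longrightarrow> g x' \<in> W"
      by blast
    define \<epsilon> where "\<epsilon> = min (e2/2) (1/2::real)"
    have eps: "0 < \<epsilon>" "\<epsilon> < e2" "\<epsilon> \<le> 1/2" using e2 by (auto simp: \<epsilon>_def)
    define N where "N = g ` {0..<\<epsilon>}"
    define N' where "N' = g ` {0<..<\<epsilon>}"
    have "openin (top_of_set {0..<1::real}) {0..<\<epsilon>}"
      unfolding openin_open using eps by (intro exI[of _ "{..<\<epsilon>}"]) auto
    then have "openin (subtopology T U) N"
      unfolding N_def using homeomorphic_map_openness[OF g(1), of "{0..<\<epsilon>}"] eps by auto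
    then have No: "openin T N" using openin_trans_full Uo by blast
    have pN: "p \<in> N" unfolding N_def using g(2) eps by force
    have NW: "N \<subseteq> W" unfolding N_def using e2(2) eps by (auto simp: dist_real_def)
    have gnp: "g s \<noteq> p" if "s \<in> {0<..<1}" for s
      using inj_onD[OF ginj, of s 0] that g(2) by auto
    have N'N: "N' = N - {p}"
    proof
      show "N' \<subseteq> N - {p}"
      proof
        fix y assume "y \<in> N'"
        then obtain s where s: "0 < s" "s < \<epsilon>" "y = g s" unfolding N'_def by auto
        then have "g s \<noteq> p" using gnp[of s] eps by auto
        then show "y \<in> N - {p}" unfolding N_def using s by auto
      qed
      show "N - {p} \<subseteq> N'"
      proof
        fix y assume "y \<in> N - {p}"
        then obtain s where "s \<in> {0..<\<epsilon>}" "y = g s" "y \<noteq> p" unfolding N_def by auto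
        then have "s \<noteq> 0" using g(2) by auto
        then show "y \<in> N'" unfolding N'_def using \<open>s \<in> {0..<\<epsilon>}\<close> \<open>y = g s\<close> by auto
      qed
    qed
    have N'c: "connectedin T N'" unfolding N'_def
      by (rule connectedin_continuous_map_image[OF gc]) (use eps in \<open>auto simp: connectedin_subtopology\<close>)
    have N'sub: "N' \<subseteq> L \<union> R" using N'N NW WLR by auto
    obtain y where y: "y \<in> L" "y \<in> N" using pclL No pN unfolding in_closure_of by blast
    obtain z where z: "z \<in> R" "z \<in> N" using pclR No pN unfolding in_closure_of by blast
    have "N' \<inter> L \<noteq> {}" using y pnot N'N by auto
    then have "N' \<subseteq> L" using sep_lemma[OF N'c N'sub Lo(1) Lo(2) LR] by blast
    moreover have "z \<in> N'" using z pnot N'N by auto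
    ultimately show ?thesis using z LR by auto
  qed
qed

lemma degree_two:
  assumes c: "0 < c" "c < 1"
  shows "degree T (h c) = 2"
  unfolding degree_def
  by (rule the_equality) (use star_exists[OF c] star_unique[OF c] in blast)+

end



lemma deg_fin:
  assumes G: "finite_top_graph T"
  shows "\<exists>V0. finite V0 \<and> {p \<in> topspace T. degree T p \<noteq> 2} \<subseteq> V0"
proof -
  have G1: "Hausdorff_space T" using G unfolding finite_top_graph_def by (rule conjunct1)
  have G2: "\<exists>V. finite V \<and> V \<subseteq> topspace T \<and>
        finite (connected_components_of (subtopology T (topspace T - V))) \<and>
        (\<forall>E \<in> connected_components_of (subtopology T (topspace T - V)).
           \<exists>h a b. homeomorphic_map (top_of_set {0<..<1::real}) (subtopology T E) h \<and>
              a \<in> V \<and> b \<in> V \<and> limitin T h a (at_right 0) \<and> limitin T h b (at_left 1))"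
    using G unfolding finite_top_graph_def by (rule conjunct2[THEN conjunct2])
  from G2 obtain V0 where V0all: "finite V0 \<and> V0 \<subseteq> topspace T \<and>
        finite (connected_components_of (subtopology T (topspace T - V0))) \<and>
        (\<forall>E \<in> connected_components_of (subtopology T (topspace T - V0)).
           \<exists>h a b. homeomorphic_map (top_of_set {0<..<1::real}) (subtopology T E) h \<and>
              a \<in> V0 \<and> b \<in> V0 \<and> limitin T h a (at_right 0) \<and> limitin T h b (at_left 1))"
    by (rule exE)
  have V0: "finite V0" "V0 \<subseteq> topspace T"
    and fin: "finite (connected_components_of (subtopology T (topspace T - V0)))"
    using V0all by blast+
  have arcs: "\<exists>h. homeomorphic_map (top_of_set {0<..<1::real}) (subtopology T E) h"
    if "E \<in> connected_components_of (subtopology T (topspace T - V0))" for E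
  proof -
    from V0all have "\<forall>E \<in> connected_components_of (subtopology T (topspace T - V0)).
           \<exists>h a b. homeomorphic_map (top_of_set {0<..<1::real}) (subtopology T E) h \<and>
              a \<in> V0 \<and> b \<in> V0 \<and> limitin T h a (at_right 0) \<and> limitin T h b (at_left 1)"
      by (rule conjunct2[THEN conjunct2[THEN conjunct2]])
    from bspec[OF this that] show ?thesis by (elim exE conjE) (rule exI, assumption)
  qed
  have Haus: "Hausdorff_space T" by (rule G1)
  have "closedin T V0" using closedin_Hausdorff_finite[OF Haus V0(2) V0(1)] .
  then have Do: "openin T (topspace T - V0)" by (simp add: closedin_def)
  have D2: "degree T p = 2" if p: "p \<in> topspace T" "p \<notin> V0" for p
  proof -
    have "p \<in> \<Union>(connected_components_of (subtopology T (topspace T - V0)))"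
      using p by (simp add: Union_connected_components_of)
    then obtain E where Em: "E \<in> connected_components_of (subtopology T (topspace T - V0))" "p \<in> E"
      by blast
    have "openin (subtopology T (topspace T - V0)) E"
      using open_in_finite_connected_components[OF fin Em(1)] .
    then have Eo: "openin T E" using openin_trans_full Do by blast
    obtain h where h: "homeomorphic_map (top_of_set {0<..<1::real}) (subtopology T E) h"
      using arcs[OF Em(1)] by blast
    interpret arc_ctx T E h using Eo h by unfold_locales
    obtain c where c: "c \<in> {0<..<1}" "p = h c" using himg Em(2) by blast
    show ?thesis using degree_two[of c] c by auto
  qed
  show ?thesis by (rule exI[of _ V0]) (use V0(1) D2 in blast)
qed

lemma mono_seq:
  assumes "\<forall>i<n. (t::nat\<Rightarrow>real) i \<le> t (Suc i)"
  shows "i \<le> j \<Longrightarrow> j \<le> n \<Longrightarrow> t i \<le> t j"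
proof (induction j)
  case 0 then show ?case by simp
next
  case (Suc j)
  show ?case
  proof (cases "i = Suc j")
    case True then show ?thesis by simp
  next
    case False
    then have "t i \<le> t j" using Suc by auto
    also have "t j \<le> t (Suc j)" using assms Suc by auto
    finally show ?thesis .
  qed
qed

definition gchain :: "'b topology \<Rightarrow> ('b \<Rightarrow> real) \<Rightarrow> 'b \<Rightarrow> (nat \<Rightarrow> 'b) \<Rightarrow> nat \<Rightarrow> 'b \<Rightarrow> 'b \<Rightarrow> bool" where
  "gchain T f v q n x y \<longleftrightarrow> q 0 = x \<and> q n = y \<and>
     (\<forall>i<n. (\<exists>E\<in>graph_edges T f v. q i \<in> T closure_of E \<and> q (Suc i) \<in> T closure_of E)
            \<and> f (q i) \<le> f (q (Suc i)))"

lemma gchain_concat: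
  assumes "gchain T f v q1 n1 x y" "gchain T f v q2 n2 y z"
  shows "gchain T f v (\<lambda>i. if i \<le> n1 then q1 i else q2 (i - n1)) (n1 + n2) x z"
proof -
  let ?q = "\<lambda>i. if i \<le> n1 then q1 i else q2 (i - n1)"
  have q1: "q1 0 = x" "q1 n1 = y" "\<And>i. i < n1 \<Longrightarrow> (\<exists>E\<in>graph_edges T f v. q1 i \<in> T closure_of E \<and> q1 (Suc i) \<in> T closure_of E) \<and> f (q1 i) \<le> f (q1 (Suc i))"
    using assms(1) unfolding gchain_def by auto
  have q2: "q2 0 = y" "q2 n2 = z" "\<And>i. i < n2 \<Longrightarrow> (\<exists>E\<in>graph_edges T f v. q2 i \<in> T closure_of E \<and> q2 (Suc i) \<in> T closure_of E) \<and> f (q2 i) \<le> f (q2 (Suc i))"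
    using assms(2) unfolding gchain_def by auto
  have hi: "?q i = q2 (i - n1)" if "n1 \<le> i" for i
    using that q1(2) q2(1) by (cases "i = n1") auto
  have end_: "?q (n1 + n2) = z" using hi[of "n1+n2"] q2(2) by simp
  have step: "(\<exists>E\<in>graph_edges T f v. ?q i \<in> T closure_of E \<and> ?q (Suc i) \<in> T closure_of E) \<and> f (?q i) \<le> f (?q (Suc i))"
    if i: "i < n1 + n2" for i
  proof (cases "i < n1")
    case True
    then show ?thesis using q1(3)[OF True] by auto
  next
    case False
    then have "?q i = q2 (i - n1)" "?q (Suc i) = q2 (Suc (i - n1))" "i - n1 < n2"
      using hi[of i] hi[of "Suc i"] i by (auto simp: Suc_diff_le)
    then show ?thesis using q2(3)[of "i - n1"] by simp
  qed
  show ?thesis unfolding gchain_def using q1(1) end_ step by auto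
qed

locale main_ctx =
  fixes T :: "'b topology" and f :: "'b \<Rightarrow> real" and v :: 'b and \<delta> :: "real \<Rightarrow> 'b"
  assumes G: "finite_top_graph T" and P: "pathin T \<delta>" and M: "strict_mono_on {0..1} (f \<circ> \<delta>)"
begin

abbreviation "Vg \<equiv> graph_vertices T f v"

lemma dcont: "continuous_map (top_of_set {0..1}) T \<delta>"
  using P unfolding pathin_def by simp

lemma dtop: "t \<in> {0..1} \<Longrightarrow> \<delta> t \<in> topspace T"
  using dcont unfolding continuous_map_def by auto

lemma fmono: "a \<in> {0..1} \<Longrightarrow> b \<in> {0..1} \<Longrightarrow> a < b \<Longrightarrow> f (\<delta> a) < f (\<delta> b)"
  using strict_mono_onD[OF M] by auto

lemma fle: "a \<in> {0..1} \<Longrightarrow> b \<in> {0..1} \<Longrightarrow> a \<le> b \<Longrightarrow> f (\<delta> a) \<le> f (\<delta> b)"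
  using fmono by (cases "a = b") (auto intro: less_imp_le)

lemma dinj: "inj_on \<delta> {0..1}"
  using inj_on_imageI2[OF strict_mono_on_imp_inj_on[OF M]] .

lemma nolocmax:
  assumes t: "t \<in> {0..1}" "t < 1"
  shows "\<not> is_local_max T f (\<delta> t)"
proof
  assume "is_local_max T f (\<delta> t)"
  then obtain U where U: "openin T U" "\<delta> t \<in> U" "\<And>q. q \<in> U \<Longrightarrow> f q \<le> f (\<delta> t)"
    unfolding is_local_max_def by blast
  have "openin (top_of_set {0..1::real}) {s \<in> topspace (top_of_set {0..1::real}). \<delta> s \<in> U}"
    by (rule openin_continuous_map_preimage[OF dcont U(1)])
  then have "openin (top_of_set {0..1::real}) {s \<in> {0..1}. \<delta> s \<in> U}" by simp
  then have "\<forall>x\<in>{s \<in> {0..1::real}. \<delta> s \<in> U}. \<exists>e>0. \<forall>x'\<in>{0..1}. dist x' x < e \<longrightarrow> x' \<in> {s \<in> {0..1}. \<delta> s \<in> U}"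
    unfolding openin_euclidean_subtopology_iff by blast
  moreover have "t \<in> {s \<in> {0..1}. \<delta> s \<in> U}" using t U by auto
  ultimately obtain e where e: "e > 0" "\<And>x'. x' \<in> {0..1} \<Longrightarrow> dist x' t < e \<Longrightarrow> \<delta> x' \<in> U"
    by blast
  define s where "s = min 1 (t + e/2)"
  have s: "s \<in> {0..1}" "t < s" "dist s t < e" using t e(1) by (auto simp: s_def dist_real_def)
  have "f (\<delta> s) \<le> f (\<delta> t)" using U(3) e(2)[OF s(1) s(3)] by blast
  moreover have "f (\<delta> t) < f (\<delta> s)" using fmono t s by auto
  ultimately show False by simp
qed

lemma hits_fin: "finite {t \<in> {0..1}. \<delta> t \<in> Vg}"
proof -
  obtain V0 where V0: "finite V0" "{p \<in> topspace T. degree T p \<noteq> 2} \<subseteq> V0"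
    using deg_fin[OF G] by blast
  have "{t \<in> {0..1}. \<delta> t \<in> Vg} \<subseteq> (\<delta> -` (V0 \<union> {v}) \<inter> {0..1}) \<union> {1}"
  proof
    fix t assume t: "t \<in> {t \<in> {0..1}. \<delta> t \<in> Vg}"
    then have t01: "t \<in> {0..1}" by simp
    show "t \<in> (\<delta> -` (V0 \<union> {v}) \<inter> {0..1}) \<union> {1}"
    proof (cases "t = 1")
      case False
      then have "t < 1" using t01 by simp
      then have "\<not> is_local_max T f (\<delta> t)" using nolocmax t01 by blast
      then show ?thesis using t V0(2) t01 unfolding graph_vertices_def by auto
    qed simp
  qed
  moreover have "finite (\<delta> -` (V0 \<union> {v}) \<inter> {0..1})"
    using finite_vimage_IntI[of "V0 \<union> {v}" \<delta> "{0..1}"] V0(1) dinj by simp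
  ultimately show ?thesis by (meson finite_Un finite.emptyI finite_insert finite_subset)
qed

lemma step:
  assumes ab: "a \<in> {0..1}" "b \<in> {0..1}" "a < b" and no: "\<And>t. t \<in> {a<..<b} \<Longrightarrow> \<delta> t \<notin> Vg"
  shows "\<exists>E\<in>graph_edges T f v. \<delta> a \<in> T closure_of E \<and> \<delta> b \<in> T closure_of E"
proof -
  define D where "D = topspace T - Vg"
  let ?S = "\<delta> ` {a<..<b}"
  have sub: "{a<..<b} \<subseteq> {0..1}" using ab by auto
  have Sc: "connectedin T ?S"
    by (rule connectedin_continuous_map_image[OF dcont]) (use sub in \<open>auto simp: connectedin_subtopology\<close>)
  have SD: "?S \<subseteq> D" unfolding D_def using no dtop sub by auto
  define m where "m = (a + b) / 2"
  have m: "m \<in> {a<..<b}" using ab by (auto simp: m_def)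
  define E where "E = connected_component_of_set (subtopology T D) (\<delta> m)"
  have EE: "E \<in> graph_edges T f v"
    unfolding graph_edges_def E_def D_def[symmetric] connected_component_in_connected_components_of
    using SD m dtop sub by auto
  have SE: "?S \<subseteq> E" unfolding E_def
    by (rule connected_component_of_maximal) (use Sc SD m in \<open>auto simp: connectedin_subtopology\<close>)
  have "{0..1} \<inter> {a<..<b} = {a<..<b}" using sub by auto
  then have cl: "a \<in> (top_of_set {0..1}) closure_of {a<..<b}" "b \<in> (top_of_set {0..1}) closure_of {a<..<b}"
    using ab by (auto simp: closure_of_subtopology)
  have "\<delta> a \<in> T closure_of ?S" "\<delta> b \<in> T closure_of ?S"
    using continuous_map_image_closure_subset[OF dcont, of "{a<..<b}"] cl by auto
  then show ?thesis using closure_of_mono[OF SE] EE by blast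
qed

lemma chain_exists:
  assumes "a \<in> {0..1}" "b \<in> {0..1}" "a \<le> b"
  shows "\<exists>q n. gchain T f v q n (\<delta> a) (\<delta> b)"
proof -
  define Hs where "Hs a b = {t \<in> {a<..<b}. \<delta> t \<in> Vg}" for a b
  have Hfin: "finite (Hs a b)" if "a \<in> {0..1}" "b \<in> {0..1}" for a b
    by (rule finite_subset[OF _ hits_fin]) (use that in \<open>auto simp: Hs_def\<close>)
  have "\<And>a b. card (Hs a b) = k \<Longrightarrow> a \<in> {0..1} \<Longrightarrow> b \<in> {0..1} \<Longrightarrow> a \<le> b \<Longrightarrow> \<exists>q n. gchain T f v q n (\<delta> a) (\<delta> b)" for k
  proof (induction k rule: less_induct)
    case (less k a b)
    show ?case
    proof (cases "a = b")
      case True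
      then show ?thesis by (intro exI[of _ "\<lambda>_. \<delta> a"] exI[of _ 0]) (simp add: gchain_def)
    next
      case False
      then have ab: "a < b" using less by simp
      show ?thesis
      proof (cases "Hs a b = {}")
        case True
        then have "\<And>t. t \<in> {a<..<b} \<Longrightarrow> \<delta> t \<notin> Vg" unfolding Hs_def by auto
        then obtain E where "E\<in>graph_edges T f v" "\<delta> a \<in> T closure_of E" "\<delta> b \<in> T closure_of E"
          using step less ab by blast
        moreover have "f (\<delta> a) \<le> f (\<delta> b)" using fle less by auto
        ultimately show ?thesis
          by (intro exI[of _ "\<lambda>i. if i = 0 then \<delta> a else \<delta> b"] exI[of _ 1]) (auto simp: gchain_def)
      next
        case False
        then obtain s where s: "s \<in> Hs a b" by blast
        then have s01: "s \<in> {0..1}" "a < s" "s < b" using less unfolding Hs_def by auto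
        have fab: "finite (Hs a b)" using Hfin less by auto
        have "Hs a s \<subset> Hs a b" using s s01 unfolding Hs_def by auto
        then have c1: "card (Hs a s) < k" using psubset_card_mono[OF fab] less by auto
        have "Hs s b \<subset> Hs a b" using s s01 unfolding Hs_def by auto
        then have c2: "card (Hs s b) < k" using psubset_card_mono[OF fab] less by auto
        obtain q1 n1 where g1: "gchain T f v q1 n1 (\<delta> a) (\<delta> s)"
          using less.IH[OF c1 refl] less s01 by auto
        obtain q2 n2 where g2: "gchain T f v q2 n2 (\<delta> s) (\<delta> b)"
          using less.IH[OF c2 refl] less s01 by auto
        show ?thesis using gchain_concat[OF g1 g2] by blast
      qed
    qed
  qed
  then show ?thesis using assms by blast
qed

lemma dist_eq:
  assumes "a \<in> {0..1}" "b \<in> {0..1}" "a \<le> b"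
  shows "graph_dist T f v (\<delta> a) (\<delta> b) = f (\<delta> b) - f (\<delta> a)"
  unfolding graph_dist_def
proof (rule cInf_eq_minimum)
  obtain q n where q: "gchain T f v q n (\<delta> a) (\<delta> b)" using chain_exists[OF assms] by blast
  have "(\<Sum>i<n. \<bar>f (q i) - f (q (Suc i))\<bar>) = (\<Sum>i<n. f (q (Suc i)) - f (q i))"
    by (rule sum.cong) (use q in \<open>auto simp: gchain_def\<close>)
  also have "\<dots> = f (\<delta> b) - f (\<delta> a)"
    using sum_lessThan_telescope[of "\<lambda>i. f (q i)" n] q by (simp add: gchain_def)
  finally have eq: "(\<Sum>i<n. \<bar>f (q i) - f (q (Suc i))\<bar>) = f (\<delta> b) - f (\<delta> a)" .
  show "f (\<delta> b) - f (\<delta> a) \<in> {(\<Sum>i<n. \<bar>f (q i) - f (q (Suc i))\<bar>) | q n.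
      q 0 = \<delta> a \<and> q n = \<delta> b \<and>
      (\<forall>i<n. \<exists>E \<in> graph_edges T f v. q i \<in> T closure_of E \<and> q (Suc i) \<in> T closure_of E)}"
    using q eq unfolding gchain_def by (intro CollectI exI[of _ q] exI[of _ n]) auto
next
  fix x assume "x \<in> {(\<Sum>i<n. \<bar>f (q i) - f (q (Suc i))\<bar>) | q n.
      q 0 = \<delta> a \<and> q n = \<delta> b \<and>
      (\<forall>i<n. \<exists>E \<in> graph_edges T f v. q i \<in> T closure_of E \<and> q (Suc i) \<in> T closure_of E)}"
  then obtain q n where q: "x = (\<Sum>i<n. \<bar>f (q i) - f (q (Suc i))\<bar>)" "q 0 = \<delta> a" "q n = \<delta> b" by blast
  have "f (\<delta> b) - f (\<delta> a) = (\<Sum>i<n. f (q (Suc i)) - f (q i))"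
    using sum_lessThan_telescope[of "\<lambda>i. f (q i)" n] q by simp
  also have "\<dots> \<le> (\<Sum>i<n. \<bar>f (q i) - f (q (Suc i))\<bar>)"
    by (rule sum_mono) auto
  finally show "f (\<delta> b) - f (\<delta> a) \<le> x" using q by simp
qed

lemma length_eq:
  "path_length (graph_dist T f v) \<delta> = ereal (f (\<delta> 1) - f (\<delta> 0))"
proof -
  define Idx where "Idx = {(t, n). t 0 = (0::real) \<and> t n = 1 \<and> (\<forall>i<n. t i \<le> t (Suc i))}"
  let ?F = "\<lambda>(t, n). ereal (\<Sum>i<n. graph_dist T f v (\<delta> (t i)) (\<delta> (t (Suc i))))"
  have val: "?F tn = ereal (f (\<delta> 1) - f (\<delta> 0))" if "tn \<in> Idx" for tn
  proof -
    obtain t n where tn0: "tn = (t, n)" by (cases tn)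
    then have tn: "tn = (t, n)" "t 0 = 0" "t n = 1" "\<forall>i<n. t i \<le> t (Suc i)"
      using that unfolding Idx_def by auto
    have bnd: "t i \<in> {0..1}" if "i \<le> n" for i
      using mono_seq[OF tn(4), of 0 i] mono_seq[OF tn(4), of i n] that tn by auto
    have "(\<Sum>i<n. graph_dist T f v (\<delta> (t i)) (\<delta> (t (Suc i)))) = (\<Sum>i<n. f (\<delta> (t (Suc i))) - f (\<delta> (t i)))"
      by (rule sum.cong) (use bnd tn(4) dist_eq in auto)
    also have "\<dots> = f (\<delta> 1) - f (\<delta> 0)"
      using sum_lessThan_telescope[of "\<lambda>i. f (\<delta> (t i))" n] tn by simp
    finally show ?thesis using tn by simp
  qed
  have ne: "((\<lambda>i. if i = 0 then 0 else 1), 1) \<in> Idx" unfolding Idx_def by auto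
  have "?F ` Idx = {ereal (f (\<delta> 1) - f (\<delta> 0))}"
  proof
    show "?F ` Idx \<subseteq> {ereal (f (\<delta> 1) - f (\<delta> 0))}"
    proof
      fix y assume "y \<in> ?F ` Idx"
      then obtain tn where "tn \<in> Idx" "y = ?F tn" by blast
      then show "y \<in> {ereal (f (\<delta> 1) - f (\<delta> 0))}" using val by simp
    qed
    show "{ereal (f (\<delta> 1) - f (\<delta> 0))} \<subseteq> ?F ` Idx"
      using image_eqI[of _ ?F, OF val[OF ne, symmetric] ne] by simp
  qed
  then show ?thesis unfolding path_length_def Idx_def[symmetric] by simp
qed

end



theorem lemma1:
  fixes X :: "'a::metric_space set" and r :: 'a and d :: "'a \<Rightarrow> real"
    and R :: "'a \<Rightarrow> 'a \<Rightarrow> bool" and T :: "'a set topology"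
    and \<delta> :: "real \<Rightarrow> 'a set" and p p' :: "'a set"
  assumes "compact X" and "geodesic_space X" and "r \<in> X"
    and "d = (\<lambda>x. dist r x)"
    and "R = reeb_rel X d \<or>
         (\<exists>\<alpha> I. \<alpha> > 0 \<and> interval_cover \<alpha> I (d ` X) \<and> R = alpha_reeb_rel X d I)"
    and "quotient_map (top_of_set X) T (quot_map X R)"
    and "finite_top_graph T"
    and "pathin T \<delta>" and "\<delta> 0 = p" and "\<delta> 1 = p'"
    and "strict_mono_on {0..1} (induced_fun d \<circ> \<delta>)"
  shows "path_length (graph_dist T (induced_fun d) (quot_map X R r)) \<delta>
           = ereal (graph_dist T (induced_fun d) (quot_map X R r) p p')
         \<and> graph_dist T (induced_fun d) (quot_map X R r) p p'
           = induced_fun d p' - induced_fun d p"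
proof -
  interpret main_ctx T "induced_fun d" "quot_map X R r" \<delta>
    using assms(7,8,11) by unfold_locales
  have "graph_dist T (induced_fun d) (quot_map X R r) (\<delta> 0) (\<delta> 1)
        = induced_fun d (\<delta> 1) - induced_fun d (\<delta> 0)"
    by (rule dist_eq) auto
  then show ?thesis using length_eq assms(9,10) by simp
qed

end
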